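(* Let $\Pi\subset\mathbb R^2$ be a convex polygon with vertex set $V=\{\mathbf v_1,\dots,\mathbf v_n\}$ ($n\ge3$, listed counterclockwise, all extreme points), and let $\delta$ be a chordal decomposition of $\Pi$ with triangle set $T_\delta$. Then for every $a\in\Pi$: (a) $\sum_{v\in V}\langle a|v\rangle_\delta=1$; (b) $a=\sum_{v\in V}\langle a|v\rangle_\delta\, v$.
   Context: A chord is a segment joining two vertices of $\Pi$ that are not adjacent on the boundary. A chordal decomposition $\delta$ is a set of $n-3$ pairwise non-crossing chords; they decompose $\Pi$ as a union of $n-2$ closed triangles (regions) whose vertices are vertices of $\Pi$; $T_\delta$ is the set of these triangles. For a triangle $\tau$ with vertices $u_0,u_1,u_2$ in counterclockwise order (indices mod 3), the areal coordinate function is $\langle x|u_i\rangle_\tau=A(u_{i-1},x,u_{i+1})/A(u_0,u_1,u_2)$ for $x\in\Pi$, where $A(\mathbf p,\mathbf q,\mathbf r)=\tfrac12\det[\mathbf q-\mathbf p,\mathbf r-\mathbf p]$. For a subset $X\subseteq\Pi$, $\mathds 1_X$ is its indicator function. Chordal coordinate function: for a vertex $v$, let $\tau_1,\dots,\tau_r$ be an enumeration of the triangles of $T_\delta$ containing $v$; set $F_0=0$ and $F_k=F_{k-1}+\mathds 1_{\tau_k}\cdot\langle\cdot|v\rangle_{\tau_k}-\mathds 1_{\tau_k\cap(\tau_1\cup\dots\cup\tau_{k-1})}\cdot\langle\cdot|v\rangle_{\tau_k}$ (pointwise operations on functions $\Pi\to\mathbb R$); then $\langle a|v\rangle_\delta=F_r(a)$.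 *)

theory Defs
  imports "HOL-Analysis.Analysis"
begin

type_synonym pt = "real \<times> real"

definition sarea :: "pt \<Rightarrow> pt \<Rightarrow> pt \<Rightarrow> real" where
  "sarea p q r = ((fst q - fst p) * (snd r - snd p) - (snd q - snd p) * (fst r - fst p)) / 2"

text \<open>Vertices v 0, ..., v (n-1) of a convex polygon, listed counterclockwise,
  all of them extreme points: every triple taken in the listing order is
  strictly positively oriented.\<close>
definition convex_polygon_ccw :: "(nat \<Rightarrow> pt) \<Rightarrow> nat \<Rightarrow> bool" where
  "convex_polygon_ccw v n \<longleftrightarrow> 3 \<le> n \<and>
     (\<forall>i j k. i < j \<and> j < k \<and> k < n \<longrightarrow> sarea (v i) (v j) (v k) > 0)"

definition polygon :: "(nat \<Rightarrow> pt) \<Rightarrow> nat \<Rightarrow> pt set" where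
  "polygon v n = convex hull (v ` {..<n})"

text \<open>A chord, encoded by its endpoint indices (i,j) with i < j: the two
  vertices are not adjacent on the boundary.\<close>
definition is_chord :: "nat \<Rightarrow> nat \<times> nat \<Rightarrow> bool" where
  "is_chord n c \<longleftrightarrow> fst c < snd c \<and> snd c < n \<and> snd c \<noteq> Suc (fst c)
      \<and> \<not> (fst c = 0 \<and> snd c = n - 1)"

definition chord_seg :: "(nat \<Rightarrow> pt) \<Rightarrow> nat \<times> nat \<Rightarrow> pt set" where
  "chord_seg v c = closed_segment (v (fst c)) (v (snd c))"

definition chordal_decomposition :: "(nat \<Rightarrow> pt) \<Rightarrow> nat \<Rightarrow> (nat \<times> nat) set \<Rightarrow> bool" where
  "chordal_decomposition v n \<delta> \<longleftrightarrow> finite \<delta> \<and> card \<delta> = n - 3 \<and> (\<forall>c\<in>\<delta>. is_chord n c) \<and>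
     (\<forall>c\<in>\<delta>. \<forall>d\<in>\<delta>. c \<noteq> d \<longrightarrow>
        chord_seg v c \<inter> chord_seg v d \<subseteq> {v (fst c), v (snd c)} \<inter> {v (fst d), v (snd d)})"

text \<open>Triangles are encoded by vertex index triples (a,b,c), a < b < c
  (hence counterclockwise).\<close>
definition tri :: "(nat \<Rightarrow> pt) \<Rightarrow> nat \<times> nat \<times> nat \<Rightarrow> pt set" where
  "tri v t = (case t of (a, b, c) \<Rightarrow> convex hull {v a, v b, v c})"

definition tri_vertex :: "nat \<Rightarrow> nat \<times> nat \<times> nat \<Rightarrow> bool" where
  "tri_vertex i t \<longleftrightarrow> (case t of (a, b, c) \<Rightarrow> i = a \<or> i = b \<or> i = c)"

text \<open>T_delta: the regions of the decomposition, i.e. the closed triangles with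
  vertices among the polygon vertices whose interior meets no chord of delta.\<close>
definition triangles :: "(nat \<Rightarrow> pt) \<Rightarrow> nat \<Rightarrow> (nat \<times> nat) set \<Rightarrow> (nat \<times> nat \<times> nat) set" where
  "triangles v n \<delta> = {(a, b, c). a < b \<and> b < c \<and> c < n \<and>
      (\<forall>d\<in>\<delta>. interior (tri v (a, b, c)) \<inter> chord_seg v d = {})}"

definition areal :: "(nat \<Rightarrow> pt) \<Rightarrow> nat \<times> nat \<times> nat \<Rightarrow> nat \<Rightarrow> pt \<Rightarrow> real" where
  "areal v t i x = (case t of (a, b, c) \<Rightarrow>
      (if i = a then sarea (v c) x (v b)
       else if i = b then sarea (v a) x (v c)
       else if i = c then sarea (v b) x (v a) else 0) / sarea (v a) (v b) (v c))"

text \<open>Chordal coordinate, given an enumeration ts = [tau_1,...,tau_r] of the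
  triangles containing v i:
  F_r = sum_k (1_{tau_k} - 1_{tau_k \<inter> (tau_1 \<union> ... \<union> tau_{k-1})}) * <.|v>_{tau_k}.\<close>
definition chordal_coord :: "(nat \<Rightarrow> pt) \<Rightarrow> (nat \<times> nat \<times> nat) list \<Rightarrow> nat \<Rightarrow> pt \<Rightarrow> real" where
  "chordal_coord v ts i x = (\<Sum>k<length ts.
      indicator (tri v (ts ! k)) x * areal v (ts ! k) i x
    - indicator (tri v (ts ! k) \<inter> (\<Union>l<k. tri v (ts ! l))) x * areal v (ts ! k) i x)"

end

theory Submission
  imports Defs
begin


definition dt :: "pt \<Rightarrow> pt \<Rightarrow> pt \<Rightarrow> real" where
  "dt p q r = (fst q - fst p) * (snd r - snd p) - (snd q - snd p) * (fst r - fst p)"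
lemma sarea_dt: "sarea p q r = dt p q r / 2"
  by (simp add: sarea_def dt_def)

lemma sarea_cyc: "sarea p q r = sarea q r p"
proof -
  have "dt p q r = dt q r p" by (simp add: dt_def algebra_simps)
  then show ?thesis by (simp add: sarea_dt)
qed
lemma sarea_swap: "sarea p r q = - sarea p q r"
proof -
  have "dt p r q = - dt p q r" by (simp add: dt_def algebra_simps)
  then show ?thesis by (simp add: sarea_dt)
qed
lemma sarea_aff: assumes "u + w = 1" shows "sarea p q (u *\<^sub>R x + w *\<^sub>R y) = u * sarea p q x + w * sarea p q y"
proof -
  have u: "u = 1 - w" using assms by simp
  have "dt p q (u *\<^sub>R x + w *\<^sub>R y) = u * dt p q x + w * dt p q y" unfolding u dt_def by (simp add: algebra_simps)
  then show ?thesis by (simp add: sarea_dt)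
qed
lemma sarea_aff3: assumes "u + w + t = 1" shows "sarea p q (u *\<^sub>R x + w *\<^sub>R y + t *\<^sub>R z) = u * sarea p q x + w * sarea p q y + t * sarea p q z"
proof -
  have u: "u = 1 - w - t" using assms by simp
  have "dt p q (u *\<^sub>R x + w *\<^sub>R y + t *\<^sub>R z) = u * dt p q x + w * dt p q y + t * dt p q z" unfolding u dt_def by (simp add: algebra_simps)
  then show ?thesis by (simp add: sarea_dt)
qed
lemma sarea_self: "sarea p q p = 0" "sarea p q q = 0"
  by (simp_all add: sarea_def)

lemma bary_sum0: "sarea c z b + sarea a z c + sarea b z a = sarea a b c"
proof -
  have "dt c z b + dt a z c + dt b z a = dt a b c" by (simp add: dt_def algebra_simps)
  then show ?thesis by (simp add: sarea_dt add_divide_distrib[symmetric])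
qed
lemma bary_sum: "sarea a b c \<noteq> 0 \<Longrightarrow> sarea c z b / sarea a b c + sarea a z c / sarea a b c + sarea b z a / sarea a b c = 1"
  by (metis add_divide_distrib bary_sum0 divide_self)
lemma bary_vec0: "sarea c z b *\<^sub>R a + sarea a z c *\<^sub>R b + sarea b z a *\<^sub>R c = sarea a b c *\<^sub>R z"
proof -
  have "dt c z b *\<^sub>R a + dt a z c *\<^sub>R b + dt b z a *\<^sub>R c = dt a b c *\<^sub>R z"
    by (simp add: dt_def prod_eq_iff algebra_simps)
  then have "(1/2) *\<^sub>R (dt c z b *\<^sub>R a + dt a z c *\<^sub>R b + dt b z a *\<^sub>R c) = (1/2) *\<^sub>R (dt a b c *\<^sub>R z)" by simp
  then show ?thesis by (simp add: sarea_dt scaleR_add_right)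
qed
lemma bary_vec: "sarea a b c \<noteq> 0 \<Longrightarrow> (sarea c z b / sarea a b c) *\<^sub>R a + (sarea a z c / sarea a b c) *\<^sub>R b + (sarea b z a / sarea a b c) *\<^sub>R c = z"
proof -
  assume h: "sarea a b c \<noteq> 0"
  have "(sarea c z b / sarea a b c) *\<^sub>R a + (sarea a z c / sarea a b c) *\<^sub>R b + (sarea b z a / sarea a b c) *\<^sub>R c
     = (1 / sarea a b c) *\<^sub>R (sarea c z b *\<^sub>R a + sarea a z c *\<^sub>R b + sarea b z a *\<^sub>R c)"
    by (simp add: scaleR_add_right)
  also have "\<dots> = z" using h by (simp add: bary_vec0)
  finally show ?thesis .
qed


lemma collinear_sarea: "collinear {a, b, c} \<Longrightarrow> sarea a b c = 0"
proof -
  assume "collinear {a, b, c}"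
  then obtain u where u: "\<forall>x\<in>{a,b,c}. \<forall>y\<in>{a,b,c}. \<exists>r. x - y = r *\<^sub>R u" unfolding collinear_def by blast
  then obtain r s where r: "b - a = r *\<^sub>R u" and s: "c - a = s *\<^sub>R u" by blast
  have "fst b - fst a = r * fst u" "snd b - snd a = r * snd u" "fst c - fst a = s * fst u" "snd c - snd a = s * snd u"
    using r s by (auto simp: prod_eq_iff)
  then show ?thesis by (simp add: sarea_def)
qed

definition bary :: "(nat \<Rightarrow> pt) \<Rightarrow> nat \<times> nat \<times> nat \<Rightarrow> pt \<Rightarrow> nat \<Rightarrow> real" where
  "bary v t z j = (if tri_vertex j t then areal v t j z else 0)"

locale cpoly =
  fixes v :: "nat \<Rightarrow> pt" and n :: nat
  assumes cp: "convex_polygon_ccw v n"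
begin

lemma n3: "3 \<le> n" using cp by (simp add: convex_polygon_ccw_def)
lemma pos: "i < j \<Longrightarrow> j < k \<Longrightarrow> k < n \<Longrightarrow> sarea (v i) (v j) (v k) > 0"
  using cp by (simp add: convex_polygon_ccw_def)

lemma sign_out: assumes "u < w" "w < n" "m < n" "m < u \<or> w < m" shows "sarea (v u) (v w) (v m) > 0"
  using assms pos[of m u w] pos[of u w m] sarea_cyc[of "v m" "v u" "v w"] by auto
lemma sign_out': assumes "u < w" "w < n" "m < n" "m \<le> u \<or> w \<le> m" shows "sarea (v u) (v w) (v m) \<ge> 0"
  using assms sign_out[of u w m] by (cases "m = u \<or> m = w") (auto simp: sarea_self)
lemma sign_in: assumes "u < m" "m < w" "w < n" shows "sarea (v u) (v w) (v m) < 0"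
  using assms pos[of u m w] sarea_swap[of "v u" "v w" "v m"] by auto
lemma sign_in': assumes "u \<le> m" "m \<le> w" "w < n" shows "sarea (v u) (v w) (v m) \<le> 0"
  using assms sign_in[of u m w] by (cases "m = u \<or> m = w") (auto simp: sarea_self)

lemma vinj: assumes "i < n" "j < n" "i \<noteq> j" shows "v i \<noteq> v j"
proof
  assume e: "v i = v j"
  obtain k where k: "k < n" "k \<noteq> i" "k \<noteq> j"
  proof -
    have "\<exists>k\<in>{0,1,2::nat}. k \<noteq> i \<and> k \<noteq> j" by auto
    then obtain k where "k\<in>{0,1,2::nat}" "k \<noteq> i" "k \<noteq> j" by blast
    moreover then have "k < n" using n3 by auto
    ultimately show ?thesis using that by blast
  qed
  have "sarea (v i) (v j) (v k) \<noteq> 0"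
  proof -
    have "\<And>a b c. a < b \<Longrightarrow> b < c \<Longrightarrow> c < n \<Longrightarrow> sarea (v a) (v b) (v c) \<noteq> 0" using pos by (metis less_irrefl)
    then show ?thesis using k assms sarea_cyc sarea_swap
      by (smt (verit, best) linorder_neqE_nat)
  qed
  then show False using e by (simp add: sarea_def)
qed

end


lemma areal_comb:
  assumes A: "sarea a b c \<noteq> 0" and s: "u + w + t = 1" and z: "z = u *\<^sub>R a + w *\<^sub>R b + t *\<^sub>R c"
  shows "sarea c z b / sarea a b c = u" "sarea a z c / sarea a b c = w" "sarea b z a / sarea a b c = t"
proof -
  have 1: "sarea c z b = sarea b c z" "sarea a z c = sarea c a z" "sarea b z a = sarea a b z"
    by (metis sarea_cyc)+
  have 2: "sarea b c a = sarea a b c" "sarea c a b = sarea a b c" by (metis sarea_cyc)+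
  show "sarea c z b / sarea a b c = u" "sarea a z c / sarea a b c = w" "sarea b z a / sarea a b c = t"
  proof -
    have e1: "sarea b c z = u * sarea b c a + w * sarea b c b + t * sarea b c c" unfolding z by (rule sarea_aff3[OF s])
    have e2: "sarea c a z = u * sarea c a a + w * sarea c a b + t * sarea c a c" unfolding z by (rule sarea_aff3[OF s])
    have e3: "sarea a b z = u * sarea a b a + w * sarea a b b + t * sarea a b c" unfolding z by (rule sarea_aff3[OF s])
    show "sarea c z b / sarea a b c = u" "sarea a z c / sarea a b c = w" "sarea b z a / sarea a b c = t"
      unfolding 1 e1 e2 e3 using A 2 by (simp_all add: sarea_self)
  qed
qed

lemma in_hull3_iff:
  assumes A: "sarea a b c \<noteq> 0"
  shows "z \<in> convex hull {a,b,c} \<longleftrightarrow>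
    (sarea c z b / sarea a b c \<ge> 0 \<and> sarea a z c / sarea a b c \<ge> 0 \<and> sarea b z a / sarea a b c \<ge> 0)"
proof
  assume "z \<in> convex hull {a,b,c}"
  then obtain u w t where "0 \<le> u" "0 \<le> w" "0 \<le> t" "u + w + t = 1" "z = u *\<^sub>R a + w *\<^sub>R b + t *\<^sub>R c"
    unfolding convex_hull_3 by blast
  then show "sarea c z b / sarea a b c \<ge> 0 \<and> sarea a z c / sarea a b c \<ge> 0 \<and> sarea b z a / sarea a b c \<ge> 0"
    using areal_comb[OF A] by simp
next
  assume h: "sarea c z b / sarea a b c \<ge> 0 \<and> sarea a z c / sarea a b c \<ge> 0 \<and> sarea b z a / sarea a b c \<ge> 0"
  show "z \<in> convex hull {a,b,c}" unfolding convex_hull_3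
    using h bary_sum[OF A, of z] bary_vec[OF A, of z] by force
qed

lemma interior_hull3:
  assumes A: "sarea a b c \<noteq> 0"
  shows "interior (convex hull {a,b,c}) =
    {z. sarea c z b / sarea a b c > 0 \<and> sarea a z c / sarea a b c > 0 \<and> sarea b z a / sarea a b c > 0}"
proof -
  have nc: "\<not> collinear {a,b,c}" using A collinear_sarea by blast
  have I: "interior (convex hull {a,b,c}) = {v. \<exists>x y z. 0 < x \<and> 0 < y \<and> 0 < z \<and> x + y + z = 1 \<and> x *\<^sub>R a + y *\<^sub>R b + z *\<^sub>R c = v}"
    by (rule interior_convex_hull_3_minimal[OF nc]) simp
  show ?thesis unfolding I
  proof (intro set_eqI iffI)
    fix z assume "z \<in> {v. \<exists>x y z. 0 < x \<and> 0 < y \<and> 0 < z \<and> x + y + z = 1 \<and> x *\<^sub>R a + y *\<^sub>R b + z *\<^sub>R c = v}"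
    then obtain u w t where "0 < u" "0 < w" "0 < t" "u + w + t = 1" "z = u *\<^sub>R a + w *\<^sub>R b + t *\<^sub>R c"
      by blast
    then show "z \<in> {z. sarea c z b / sarea a b c > 0 \<and> sarea a z c / sarea a b c > 0 \<and> sarea b z a / sarea a b c > 0}"
      using areal_comb[OF A] by simp
  next
    fix z assume h: "z \<in> {z. sarea c z b / sarea a b c > 0 \<and> sarea a z c / sarea a b c > 0 \<and> sarea b z a / sarea a b c > 0}"
    show "z \<in> {v. \<exists>x y z. 0 < x \<and> 0 < y \<and> 0 < z \<and> x + y + z = 1 \<and> x *\<^sub>R a + y *\<^sub>R b + z *\<^sub>R c = v}"
      using h bary_sum[OF A, of z] bary_vec[OF A, of z] by force
  qed
qed

context cpoly begin

lemma areal_abc: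
  assumes "a < b" "b < c"
  shows "areal v (a,b,c) a z = sarea (v c) z (v b) / sarea (v a) (v b) (v c)"
        "areal v (a,b,c) b z = sarea (v a) z (v c) / sarea (v a) (v b) (v c)"
        "areal v (a,b,c) c z = sarea (v b) z (v a) / sarea (v a) (v b) (v c)"
  using assms by (auto simp: areal_def)

lemma tri_iff:
  assumes "a < b" "b < c" "c < n"
  shows "z \<in> tri v (a,b,c) \<longleftrightarrow> areal v (a,b,c) a z \<ge> 0 \<and> areal v (a,b,c) b z \<ge> 0 \<and> areal v (a,b,c) c z \<ge> 0"
  unfolding areal_abc[OF assms(1,2)] tri_def using in_hull3_iff[of "v a" "v b" "v c" z] pos[OF assms] by simp

lemma interior_tri:
  assumes "a < b" "b < c" "c < n"
  shows "interior (tri v (a,b,c)) = {z. areal v (a,b,c) a z > 0 \<and> areal v (a,b,c) b z > 0 \<and> areal v (a,b,c) c z > 0}"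
  unfolding areal_abc[OF assms(1,2)] tri_def using interior_hull3[of "v a" "v b" "v c"] pos[OF assms] by simp

lemma areal_tri_comb:
  assumes "a < b" "b < c" "c < n" "u + w + t = 1"
  shows "areal v (a,b,c) a (u *\<^sub>R v a + w *\<^sub>R v b + t *\<^sub>R v c) = u"
        "areal v (a,b,c) b (u *\<^sub>R v a + w *\<^sub>R v b + t *\<^sub>R v c) = w"
        "areal v (a,b,c) c (u *\<^sub>R v a + w *\<^sub>R v b + t *\<^sub>R v c) = t"
  unfolding areal_abc[OF assms(1,2)] using areal_comb[OF _ assms(4) refl] pos[OF assms(1-3)] by auto

lemma bary_sums:
  assumes "a < b" "b < c" "c < n"
  shows "(\<Sum>j<n. bary v (a,b,c) z j) = 1" "(\<Sum>j<n. bary v (a,b,c) z j *\<^sub>R v j) = z"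
proof -
  have A: "sarea (v a) (v b) (v c) \<noteq> 0" using pos[OF assms] by simp
  have sub: "{a,b,c} \<subseteq> {..<n}" using assms by auto
  have z: "\<forall>j\<in>{..<n} - {a,b,c}. bary v (a,b,c) z j = 0" by (auto simp: bary_def tri_vertex_def)
  have z2: "\<forall>j\<in>{..<n} - {a,b,c}. bary v (a,b,c) z j *\<^sub>R v j = 0" using z by auto
  have "(\<Sum>j<n. bary v (a,b,c) z j) = (\<Sum>j\<in>{a,b,c}. bary v (a,b,c) z j)"
    by (rule sum.mono_neutral_right[OF _ sub z]) simp
  also have "\<dots> = 1" using assms bary_sum[OF A, of z] by (simp add: bary_def tri_vertex_def areal_abc)
  finally show "(\<Sum>j<n. bary v (a,b,c) z j) = 1" .
  have "(\<Sum>j<n. bary v (a,b,c) z j *\<^sub>R v j) = (\<Sum>j\<in>{a,b,c}. bary v (a,b,c) z j *\<^sub>R v j)"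
    by (rule sum.mono_neutral_right[OF _ sub z2]) simp
  also have "\<dots> = z" using assms bary_vec[OF A, of z] by (simp add: bary_def tri_vertex_def areal_abc add.assoc)
  finally show "(\<Sum>j<n. bary v (a,b,c) z j *\<^sub>R v j) = z" .
qed

end


lemma comb_eq: fixes p q :: pt assumes "D \<noteq> 0"
  shows "(1 - X / D) *\<^sub>R p + (X / D) *\<^sub>R q = (1/D) *\<^sub>R (X *\<^sub>R q - (X - D) *\<^sub>R p)"
  using assms by (intro prod_eqI) (simp_all add: field_simps)

lemma negneg_scale: "(1/(-a)) *\<^sub>R (-w) = (1/(a::real)) *\<^sub>R (w::'a::real_vector)"
  by simp

lemma segs_meet:
  assumes d: "(sarea p3 p4 p1 > 0 \<and> sarea p3 p4 p2 < 0) \<or> (sarea p3 p4 p1 < 0 \<and> sarea p3 p4 p2 > 0)"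
      and e: "(sarea p1 p2 p3 > 0 \<and> sarea p1 p2 p4 < 0) \<or> (sarea p1 p2 p3 < 0 \<and> sarea p1 p2 p4 > 0)"
  shows "closed_segment p1 p2 \<inter> closed_segment p3 p4 \<noteq> {}"
proof -
  define D1 where "D1 = dt p3 p4 p1"
  define D2 where "D2 = dt p3 p4 p2"
  define E3 where "E3 = dt p1 p2 p3"
  define E4 where "E4 = dt p1 p2 p4"
  have d': "(D1 > 0 \<and> D2 < 0) \<or> (D1 < 0 \<and> D2 > 0)" using d by (simp add: D1_def D2_def sarea_dt)
  have e': "(E3 > 0 \<and> E4 < 0) \<or> (E3 < 0 \<and> E4 > 0)" using e by (simp add: E3_def E4_def sarea_dt)
  have id1: "D1 *\<^sub>R p2 - D2 *\<^sub>R p1 = E4 *\<^sub>R p3 - E3 *\<^sub>R p4"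
    by (simp add: D1_def D2_def E3_def E4_def dt_def prod_eq_iff algebra_simps)
  have id2: "E3 - E4 = -(D1 - D2)" by (simp add: D1_def D2_def E3_def E4_def dt_def algebra_simps)
  have DD: "D1 - D2 \<noteq> 0" using d' by auto
  have EE: "E3 - E4 \<noteq> 0" using e' by auto
  define t where "t = D1 / (D1 - D2)"
  define s where "s = E3 / (E3 - E4)"
  have t01: "0 \<le> t \<and> t \<le> 1" using d' unfolding t_def by (auto simp: divide_simps)
  have s01: "0 \<le> s \<and> s \<le> 1" using e' unfolding s_def by (auto simp: divide_simps)
  have x: "(1 - t) *\<^sub>R p1 + t *\<^sub>R p2 = (1/(D1-D2)) *\<^sub>R (D1 *\<^sub>R p2 - (D1 - (D1 - D2)) *\<^sub>R p1)"
    unfolding t_def by (rule comb_eq[OF DD])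
  have y: "(1 - s) *\<^sub>R p3 + s *\<^sub>R p4 = (1/(E3-E4)) *\<^sub>R (E3 *\<^sub>R p4 - (E3 - (E3 - E4)) *\<^sub>R p3)"
    unfolding s_def by (rule comb_eq[OF EE])
  have xy: "(1 - t) *\<^sub>R p1 + t *\<^sub>R p2 = (1 - s) *\<^sub>R p3 + s *\<^sub>R p4"
  proof -
    have "(1 - s) *\<^sub>R p3 + s *\<^sub>R p4 = (1/(E3-E4)) *\<^sub>R (E3 *\<^sub>R p4 - E4 *\<^sub>R p3)" using y by simp
    also have "\<dots> = (1/(-(D1-D2))) *\<^sub>R (-(E4 *\<^sub>R p3 - E3 *\<^sub>R p4))" unfolding id2 by (simp only: minus_diff_eq)
    also have "\<dots> = (1/(D1-D2)) *\<^sub>R (D1 *\<^sub>R p2 - D2 *\<^sub>R p1)" unfolding id1[symmetric] negneg_scale by simp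
    also have "\<dots> = (1 - t) *\<^sub>R p1 + t *\<^sub>R p2" using x by simp
    finally show ?thesis by simp
  qed
  have "(1 - t) *\<^sub>R p1 + t *\<^sub>R p2 \<in> closed_segment p1 p2" using t01 unfolding closed_segment_def by blast
  moreover have "(1 - t) *\<^sub>R p1 + t *\<^sub>R p2 \<in> closed_segment p3 p4" using s01 xy unfolding closed_segment_def by auto
  ultimately show ?thesis by blast
qed

context cpoly begin

lemma chords_cross:
  assumes "i < k" "k < j" "j < l" "l < n"
  shows "closed_segment (v i) (v j) \<inter> closed_segment (v k) (v l) \<noteq> {}"
proof (rule segs_meet)
  show "0 < sarea (v k) (v l) (v i) \<and> sarea (v k) (v l) (v j) < 0 \<or> sarea (v k) (v l) (v i) < 0 \<and> 0 < sarea (v k) (v l) (v j)"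
    using sign_out[of k l i] sign_in[of k j l] assms by auto
  show "0 < sarea (v i) (v j) (v k) \<and> sarea (v i) (v j) (v l) < 0 \<or> sarea (v i) (v j) (v k) < 0 \<and> 0 < sarea (v i) (v j) (v l)"
    using sign_out[of i j l] sign_in[of i k j] assms by auto
qed

end


definition crs :: "nat \<times> nat \<Rightarrow> nat \<times> nat \<Rightarrow> bool" where
  "crs c d \<longleftrightarrow> fst c < fst d \<and> fst d < snd c \<and> snd c < snd d"

definition apexf :: "(nat \<times> nat) set \<Rightarrow> nat \<times> nat \<Rightarrow> nat" where
  "apexf S c = (if {j. (fst c, j) \<in> S \<and> j < snd c} = {} then Suc (fst c) else Max {j. (fst c, j) \<in> S \<and> j < snd c})"

lemma apexf_props:
  assumes fin: "finite S" and wf: "\<forall>c\<in>S. fst c + 2 \<le> snd c"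
    and nc: "\<forall>c\<in>S. \<forall>d\<in>S. \<not> crs c d"
    and c: "fst c + 2 \<le> snd c"
  shows "fst c < apexf S c" "apexf S c < snd c"
    "apexf S c \<noteq> Suc (fst c) \<Longrightarrow> (fst c, apexf S c) \<in> S"
    "\<And>d. d \<in> S \<Longrightarrow> d \<noteq> c \<Longrightarrow> \<not> (fst c \<le> fst d \<and> fst d < apexf S c \<and> apexf S c < snd d \<and> snd d \<le> snd c)"
proof -
  define J where "J = {j. (fst c, j) \<in> S \<and> j < snd c}"
  have finJ: "finite J" unfolding J_def
    by (rule finite_subset[of _ "snd ` S"]) (auto intro: finite_imageI[OF fin] image_eqI[where x="(fst c, _)"])
  have A: "apexf S c = (if J = {} then Suc (fst c) else Max J)" unfolding apexf_def J_def by simp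
  have MJ: "J \<noteq> {} \<Longrightarrow> Max J \<in> J" using finJ by simp
  have Jgt: "\<And>j. j \<in> J \<Longrightarrow> fst c + 2 \<le> j \<and> j < snd c" unfolding J_def using wf by force
  show 1: "fst c < apexf S c" unfolding A using MJ Jgt by (cases "J = {}") force+
  show 2: "apexf S c < snd c" unfolding A using MJ Jgt c by (auto)
  show "apexf S c \<noteq> Suc (fst c) \<Longrightarrow> (fst c, apexf S c) \<in> S" unfolding A using MJ by (auto simp: J_def)
  fix d assume d: "d \<in> S" "d \<noteq> c"
  show "\<not> (fst c \<le> fst d \<and> fst d < apexf S c \<and> apexf S c < snd d \<and> snd d \<le> snd c)"
  proof
    assume h: "fst c \<le> fst d \<and> fst d < apexf S c \<and> apexf S c < snd d \<and> snd d \<le> snd c"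
    show False
    proof (cases "fst d = fst c")
      case True
      then have "snd d \<noteq> snd c" using d by (metis prod_eq_iff)
      then have "snd d \<in> J" using h d True unfolding J_def by (metis (mono_tags, lifting) le_neq_implies_less mem_Collect_eq prod.collapse)
      then have "J \<noteq> {}" "snd d \<le> Max J" using finJ by auto
      then show False using h unfolding A by auto
    next
      case False
      then have "fst c < fst d" using h by simp
      then have Jne: "J \<noteq> {}" using h unfolding A by (cases "J = {}") auto
      then have "(fst c, Max J) \<in> S" using MJ unfolding J_def by auto
      moreover have "crs (fst c, Max J) d" unfolding crs_def using h Jne `fst c < fst d` unfolding A by auto
      ultimately show False using nc d by blast
    qed
  qed
qed

lemma count_bound:
  assumes fin: "finite S" and wf: "\<forall>c\<in>S. fst c + 2 \<le> snd c \<and> snd c \<le> N"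
    and nc: "\<forall>c\<in>S. \<forall>d\<in>S. \<not> crs c d"
  shows "card S \<le> N - 1"
proof -
  have wf': "\<forall>c\<in>S. fst c + 2 \<le> snd c" using wf by auto
  note P = apexf_props[OF fin wf' nc]
  have inj: "inj_on (apexf S) S"
  proof (rule inj_onI)
    fix c d assume c: "c \<in> S" and d: "d \<in> S" and e: "apexf S c = apexf S d"
    show "c = d"
    proof (rule ccontr)
      assume ne: "c \<noteq> d"
      have c2: "fst c + 2 \<le> snd c" and d2: "fst d + 2 \<le> snd d" using wf c d by auto
      note Pc = P[OF c2] and Pd = P[OF d2]
      have u1: "\<not> (fst c \<le> fst d \<and> fst d < apexf S c \<and> apexf S c < snd d \<and> snd d \<le> snd c)"
        using Pc(4)[OF d] ne by auto
      have u2: "\<not> (fst d \<le> fst c \<and> fst c < apexf S d \<and> apexf S d < snd c \<and> snd c \<le> snd d)"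
        using Pd(4)[OF c] ne by auto
      have n1: "\<not> crs c d" "\<not> crs d c" using nc c d by auto
      show False using u1 u2 n1 Pc(1,2) Pd(1,2) e unfolding crs_def by linarith
    qed
  qed
  have sub: "apexf S ` S \<subseteq> {1..<N}"
  proof
    fix x assume "x \<in> apexf S ` S"
    then obtain c where c: "c \<in> S" "x = apexf S c" by blast
    then have "fst c + 2 \<le> snd c" "snd c \<le> N" using wf by auto
    then show "x \<in> {1..<N}" using P(1,2) c by fastforce
  qed
  have "card S = card (apexf S ` S)" using card_image[OF inj] by simp
  also have "\<dots> \<le> card {1..<N}" by (rule card_mono[OF _ sub]) simp
  finally show ?thesis by simp
qed



lemma seg_le: assumes "sarea P Q x \<le> 0" "sarea P Q y \<le> 0" "z \<in> closed_segment x y"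
  shows "sarea P Q z \<le> 0"
proof -
  obtain u where u: "0 \<le> u" "u \<le> 1" "z = (1 - u) *\<^sub>R x + u *\<^sub>R y" using assms(3) unfolding closed_segment_def by blast
  have "sarea P Q z = (1 - u) * sarea P Q x + u * sarea P Q y" unfolding u(3) by (rule sarea_aff) simp
  moreover have "(1 - u) * sarea P Q x \<le> 0" "u * sarea P Q y \<le> 0" using u assms by (auto simp: mult_nonneg_nonpos)
  ultimately show ?thesis by linarith
qed

lemma seg_ge: assumes "sarea P Q x \<ge> 0" "sarea P Q y \<ge> 0" "z \<in> closed_segment x y"
  shows "sarea P Q z \<ge> 0"
proof -
  have "sarea Q P x \<le> 0" "sarea Q P y \<le> 0" using assms sarea_swap sarea_cyc by (metis neg_0_le_iff_le)+
  then have "sarea Q P z \<le> 0" using seg_le assms(3) by blast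
  then show ?thesis using sarea_swap sarea_cyc by (metis neg_0_le_iff_le)
qed

definition inarc :: "nat \<Rightarrow> nat \<Rightarrow> nat \<Rightarrow> nat \<times> nat \<Rightarrow> bool" where
  "inarc a b c d \<longleftrightarrow> (a \<le> fst d \<and> snd d \<le> b) \<or> (b \<le> fst d \<and> snd d \<le> c) \<or>
     ((fst d \<le> a \<or> c \<le> fst d) \<and> (snd d \<le> a \<or> c \<le> snd d))"

context cpoly begin

lemma inarc_avoid:
  assumes abc: "a < b" "b < c" "c < n" and d: "fst d < n" "snd d < n" "fst d \<le> snd d" and w: "inarc a b c d"
  shows "interior (tri v (a,b,c)) \<inter> closed_segment (v (fst d)) (v (snd d)) = {}"
proof (rule ccontr)
  assume "interior (tri v (a,b,c)) \<inter> closed_segment (v (fst d)) (v (snd d)) \<noteq> {}"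
  then obtain z where zi: "z \<in> interior (tri v (a,b,c))" and zs: "z \<in> closed_segment (v (fst d)) (v (snd d))" by blast
  have A: "sarea (v a) (v b) (v c) > 0" using pos[OF abc] .
  have ar: "areal v (a,b,c) a z > 0" "areal v (a,b,c) b z > 0" "areal v (a,b,c) c z > 0"
    using zi unfolding interior_tri[OF abc] by auto
  have c1: "sarea (v b) z (v a) = sarea (v a) (v b) z" "sarea (v c) z (v b) = sarea (v b) (v c) z"
    "sarea (v a) z (v c) = - sarea (v a) (v c) z"
    by (metis sarea_cyc, metis sarea_cyc, metis sarea_cyc sarea_swap)
  have s1: "sarea (v a) (v b) z > 0" "sarea (v b) (v c) z > 0" "sarea (v a) (v c) z < 0"
    using ar A unfolding areal_abc[OF abc(1,2)] c1 by (auto simp: zero_less_divide_iff divide_less_0_iff)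
  consider "a \<le> fst d \<and> snd d \<le> b" | "b \<le> fst d \<and> snd d \<le> c" | "(fst d \<le> a \<or> c \<le> fst d) \<and> (snd d \<le> a \<or> c \<le> snd d)"
    using w unfolding inarc_def by blast
  then show False
  proof cases
    case 1
    then have "sarea (v a) (v b) (v (fst d)) \<le> 0" "sarea (v a) (v b) (v (snd d)) \<le> 0"
      using sign_in'[of a "fst d" b] sign_in'[of a "snd d" b] abc d by auto
    then have "sarea (v a) (v b) z \<le> 0" using seg_le zs by blast
    then show False using s1 by simp
  next
    case 2
    then have "sarea (v b) (v c) (v (fst d)) \<le> 0" "sarea (v b) (v c) (v (snd d)) \<le> 0"
      using sign_in'[of b "fst d" c] sign_in'[of b "snd d" c] abc d by auto
    then have "sarea (v b) (v c) z \<le> 0" using seg_le zs by blast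
    then show False using s1 by simp
  next
    case 3
    then have "sarea (v a) (v c) (v (fst d)) \<ge> 0" "sarea (v a) (v c) (v (snd d)) \<ge> 0"
      using sign_out'[of a c "fst d"] sign_out'[of a c "snd d"] abc d by auto
    then have "sarea (v a) (v c) z \<ge> 0" using seg_ge zs by blast
    then show False using s1 by simp
  qed
qed

lemma edge_avoid:
  assumes abc: "a < b" "b < c" "c < n" and m: "Suc m < n"
  shows "interior (tri v (a,b,c)) \<inter> closed_segment (v m) (v (Suc m)) = {}"
  using inarc_avoid[OF abc, of "(m, Suc m)"] m unfolding inarc_def by fastforce

lemma root_avoid:
  assumes abc: "a < b" "b < c" "c < n"
  shows "interior (tri v (a,b,c)) \<inter> closed_segment (v 0) (v (n - 1)) = {}"
  using inarc_avoid[OF abc, of "(0, n - 1)"] abc unfolding inarc_def by fastforce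

end

locale cdec = cpoly +
  fixes \<delta> :: "(nat \<times> nat) set"
  assumes cd: "chordal_decomposition v n \<delta>"
begin

lemma finD: "finite \<delta>" and cardD: "card \<delta> = n - 3"
  using cd by (auto simp: chordal_decomposition_def)

lemma chordD: "c \<in> \<delta> \<Longrightarrow> fst c + 2 \<le> snd c \<and> snd c < n \<and> c \<noteq> (0, n - 1)"
  using cd unfolding chordal_decomposition_def is_chord_def by fastforce

lemma ncD: assumes "c \<in> \<delta>" "d \<in> \<delta>" shows "\<not> crs c d"
proof
  assume cr: "crs c d"
  then have ne: "c \<noteq> d" by (auto simp: crs_def)
  have b: "snd d < n" using chordD assms by blast
  have le: "fst c < fst d" "fst d < snd c" "snd c < snd d" using cr by (auto simp: crs_def)
  have sub: "chord_seg v c \<inter> chord_seg v d \<subseteq> {v (fst c), v (snd c)} \<inter> {v (fst d), v (snd d)}"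
    using cd assms ne unfolding chordal_decomposition_def by blast
  have i: "v (fst c) \<noteq> v (fst d)" "v (fst c) \<noteq> v (snd d)" "v (snd c) \<noteq> v (fst d)" "v (snd c) \<noteq> v (snd d)"
    using vinj le b by (metis less_trans order.strict_implies_not_eq)+
  have "{v (fst c), v (snd c)} \<inter> {v (fst d), v (snd d)} = {}"
    using i by blast
  moreover have "chord_seg v c \<inter> chord_seg v d \<noteq> {}"
    unfolding chord_seg_def using chords_cross le b by simp
  ultimately show False using sub by blast
qed

definition "R = insert (0, n - 1) \<delta>"

lemma R_props: "c \<in> R \<Longrightarrow> fst c + 2 \<le> snd c \<and> snd c < n"
  using chordD n3 unfolding R_def by (cases "c = (0, n - 1)") auto

lemma ncR: assumes "c \<in> R" "d \<in> R" shows "\<not> crs c d"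
proof
  assume cr: "crs c d"
  have "snd d < n" using R_props assms(2) by blast
  then have "c \<noteq> (0,n-1)" using cr by (auto simp: crs_def)
  moreover have "d \<noteq> (0, n-1)" using cr by (auto simp: crs_def)
  ultimately have "c \<in> \<delta>" "d \<in> \<delta>" using assms by (auto simp: R_def)
  then show False using ncD cr by blast
qed

lemma add_chord:
  assumes kq: "k + 2 \<le> q" "q < n" "(k, q) \<noteq> (0, n - 1)"
    and nc: "\<forall>d\<in>\<delta>. \<not> crs (k,q) d \<and> \<not> crs d (k,q)"
  shows "(k, q) \<in> \<delta>"
proof (rule ccontr)
  assume nin: "(k, q) \<notin> \<delta>"
  let ?S = "insert (k,q) R"
  have r0: "(0, n - 1) \<notin> \<delta>" using chordD by blast
  have "card R = n - 2" unfolding R_def using r0 finD cardD n3 by simp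
  then have cS: "card ?S = n - 1" using nin kq(3) finD n3 unfolding R_def by simp
  have "card ?S \<le> (n - 1) - 1"
  proof (rule count_bound)
    show "finite ?S" using finD unfolding R_def by simp
    show "\<forall>c\<in>?S. fst c + 2 \<le> snd c \<and> snd c \<le> n - 1" using R_props kq by fastforce
    show "\<forall>c\<in>?S. \<forall>d\<in>?S. \<not> crs c d"
    proof (intro ballI)
      fix c d assume c: "c \<in> ?S" and d: "d \<in> ?S"
      have r: "\<not> crs (k,q) e \<and> \<not> crs e (k,q)" if e: "e \<in> ?S" for e
      proof (cases "e \<in> \<delta>")
        case True then show ?thesis using nc by blast
      next
        case False
        then have "e = (0, n - 1) \<or> e = (k, q)" using e unfolding R_def by blast
        then show ?thesis using kq unfolding crs_def by auto
      qed
      show "\<not> crs c d"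
      proof (cases "c = (k,q) \<or> d = (k,q)")
        case True then show ?thesis using r c d by blast
      next
        case False then have "c \<in> R" "d \<in> R" using c d by auto
        then show ?thesis using ncR by blast
      qed
    qed
  qed
  then show False using cS n3 by simp
qed

lemma apex:
  assumes pq: "(p, q) \<in> R"
  shows "\<exists>k. p < k \<and> k < q \<and> ((p, k) \<in> \<delta> \<or> k = Suc p) \<and> ((k, q) \<in> \<delta> \<or> q = Suc k)"
proof -
  have wf: "\<forall>c\<in>\<delta>. fst c + 2 \<le> snd c" using chordD by blast
  have nc: "\<forall>c\<in>\<delta>. \<forall>d\<in>\<delta>. \<not> crs c d" using ncD by blast
  have pq2: "fst (p,q) + 2 \<le> snd (p,q)" "q < n" using R_props[OF pq] by auto
  note P = apexf_props[OF finD wf nc pq2(1)]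
  define k where "k = apexf \<delta> (p,q)"
  have k: "p < k" "k < q" using P(1,2) unfolding k_def by auto
  have pk: "(p, k) \<in> \<delta> \<or> k = Suc p" using P(3) unfolding k_def by auto
  have kq: "(k, q) \<in> \<delta> \<or> q = Suc k"
  proof (cases "q = Suc k")
    case False
    show ?thesis
    proof (intro disjI1 add_chord)
      show "k + 2 \<le> q" using False k by simp
      show "q < n" using pq2 by simp
      show "(k, q) \<noteq> (0, n - 1)" using k by simp
      show "\<forall>d\<in>\<delta>. \<not> crs (k, q) d \<and> \<not> crs d (k, q)"
      proof
        fix d assume d: "d \<in> \<delta>"
        have dR: "d \<in> R" using d unfolding R_def by simp
        have n1: "\<not> crs (p,q) d" "\<not> crs d (p,q)" using ncR[OF pq dR] ncR[OF dR pq] by auto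
        have u: "d \<noteq> (p,q) \<Longrightarrow> \<not> (p \<le> fst d \<and> fst d < k \<and> k < snd d \<and> snd d \<le> q)"
          using P(4)[OF d] unfolding k_def by simp
        obtain x y where xy: "d = (x, y)" by (cases d)
        have c1: "\<not> crs (k, q) d"
        proof
          assume "crs (k,q) d" then have "crs (p,q) d" using k xy unfolding crs_def by simp
          then show False using n1 by blast
        qed
        have c2: "\<not> crs d (k, q)"
        proof
          assume h: "crs d (k,q)"
          then have h': "x < k" "k < y" "y < q" using xy unfolding crs_def by auto
          show False
          proof (cases "x < p")
            case True then have "crs d (p,q)" using h' k xy unfolding crs_def by simp
            then show False using n1 by blast
          next
            case False
            then have "d \<noteq> (p,q)" using h' xy by simp
            then show False using u h' False xy by simp
          qed
        qed
        show "\<not> crs (k, q) d \<and> \<not> crs d (k, q)" using c1 c2 by blast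
      qed
    qed
  qed simp
  show ?thesis using k pk kq by blast
qed

lemma apex_inarc:
  assumes pq: "(p, q) \<in> R" and k: "p < k" "k < q" and pk: "(p, k) \<in> \<delta> \<or> k = Suc p"
    and kq: "(k, q) \<in> \<delta> \<or> q = Suc k" and d: "d \<in> \<delta>"
  shows "inarc p k q d"
proof -
  have dR: "d \<in> R" using d unfolding R_def by simp
  have n1: "\<not> crs (p,q) d" "\<not> crs d (p,q)" using ncR[OF pq dR] ncR[OF dR pq] by auto
  have n2: "\<not> (p < fst d \<and> fst d < k \<and> k < snd d)"
    using pk ncD[OF _ d, of "(p,k)"] unfolding crs_def by auto
  have n3: "\<not> (fst d < k \<and> k < snd d \<and> snd d < q)"
    using kq ncD[OF d, of "(k,q)"] unfolding crs_def by auto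
  have "fst d < snd d" using chordD[OF d] by simp
  then show ?thesis using n1 n2 n3 k unfolding inarc_def crs_def fst_conv snd_conv by presburger
qed

end


lemma sarea_anti: "sarea q p r = - sarea p q r"
proof -
  have "dt q p r = - dt p q r" by (simp add: dt_def algebra_simps)
  then show ?thesis by (simp add: sarea_dt)
qed

lemma line3:
  fixes c P Q Z :: pt
  assumes c: "c \<noteq> 0" and e: "inner c P = b" "inner c Q = b" "inner c Z = b"
  shows "sarea P Q Z = 0"
proof -
  obtain c1 c2 where cc: "c = (c1, c2)" by (cases c)
  define q1 where "q1 = fst Q - fst P"
  define q2 where "q2 = snd Q - snd P"
  define z1 where "z1 = fst Z - fst P"
  define z2 where "z2 = snd Z - snd P"
  have i: "inner c X = c1 * fst X + c2 * snd X" for X :: pt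
    unfolding cc by (cases X) simp
  have e1: "c1 * q1 = - (c2 * q2)" using e unfolding i q1_def q2_def by (simp add: algebra_simps)
  have e2: "c1 * z1 = - (c2 * z2)" using e unfolding i z1_def z2_def by (simp add: algebra_simps)
  have dt: "dt P Q Z = q1 * z2 - q2 * z1" unfolding dt_def q1_def q2_def z1_def z2_def by simp
  have "c1 * (q1 * z2 - q2 * z1) = (c1 * q1) * z2 - (c1 * z1) * q2" by (simp add: algebra_simps)
  also have "\<dots> = 0" unfolding e1 e2 by (simp add: algebra_simps)
  finally have h1: "c1 * (q1 * z2 - q2 * z1) = 0" .
  have "c2 * (q1 * z2 - q2 * z1) = (c2 * z2) * q1 - (c2 * q2) * z1" by (simp add: algebra_simps)
  also have "\<dots> = 0" using e1 e2 by (smt (verit, ccfv_SIG) mult.commute mult.left_commute mult_minus_left)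
  finally have h2: "c2 * (q1 * z2 - q2 * z1) = 0" .
  have "c1 \<noteq> 0 \<or> c2 \<noteq> 0" using c cc by (auto simp: zero_prod_def)
  then have "q1 * z2 - q2 * z1 = 0" using h1 h2 by auto
  then show ?thesis by (simp add: sarea_dt dt)
qed

lemma hull3_seg:
  assumes A: "sarea a b c \<noteq> 0" and z: "z \<in> convex hull {a,b,c}" and t: "sarea b z a / sarea a b c = 0"
  shows "z \<in> closed_segment a b"
proof -
  let ?u = "sarea c z b / sarea a b c" and ?w = "sarea a z c / sarea a b c"
  have s: "?u + ?w = 1" using bary_sum[OF A, of z] t by simp
  have zz: "z = ?u *\<^sub>R a + ?w *\<^sub>R b" using bary_vec[OF A, of z] t by simp
  have "0 \<le> ?w" using z in_hull3_iff[OF A] by blast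
  moreover have "?w \<le> 1" using s z in_hull3_iff[OF A] by auto
  moreover have "z = (1 - ?w) *\<^sub>R a + ?w *\<^sub>R b" using zz s by (metis add_diff_cancel_right')
  ultimately show ?thesis unfolding closed_segment_def by blast
qed

context cpoly begin

lemma sarea_ne0: assumes "i < n" "j < n" "k < n" "i \<noteq> j" "i \<noteq> k" "j \<noteq> k"
  shows "sarea (v i) (v j) (v k) \<noteq> 0"
proof -
  have "\<And>a b c. a < b \<Longrightarrow> b < c \<Longrightarrow> c < n \<Longrightarrow> sarea (v a) (v b) (v c) \<noteq> 0" using pos by (metis less_irrefl)
  then show ?thesis using assms sarea_cyc sarea_swap
    by (smt (verit, best) linorder_neqE_nat)
qed

lemma half_poly: assumes "\<forall>j<n. sarea P Q (v j) \<ge> 0" "z \<in> polygon v n" shows "sarea P Q z \<ge> 0"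
proof -
  have cv: "convex {z. sarea P Q z \<ge> 0}"
    unfolding convex_def
  proof (intro allI impI ballI)
    fix x y :: pt and u w :: real
    assume h: "x \<in> {z. sarea P Q z \<ge> 0}" "y \<in> {z. sarea P Q z \<ge> 0}" "0 \<le> u" "0 \<le> w" "u + w = 1"
    then show "u *\<^sub>R x + w *\<^sub>R y \<in> {z. sarea P Q z \<ge> 0}" using sarea_aff[OF h(5)] by simp
  qed
  have "v ` {..<n} \<subseteq> {z. sarea P Q z \<ge> 0}" using assms(1) by auto
  then have "convex hull (v ` {..<n}) \<subseteq> {z. sarea P Q z \<ge> 0}" using cv by (rule hull_minimal)
  then show ?thesis using assms(2) unfolding polygon_def by auto
qed

lemma poly_edge: assumes "Suc m < n" "z \<in> polygon v n" shows "sarea (v m) (v (Suc m)) z \<ge> 0"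
proof -
  have "\<forall>j<n. sarea (v m) (v (Suc m)) (v j) \<ge> 0"
  proof (intro allI impI)
    fix j assume "j < n" then show "sarea (v m) (v (Suc m)) (v j) \<ge> 0" using sign_out'[of m "Suc m" j] assms(1) by linarith
  qed
  then show ?thesis using half_poly assms(2) by blast
qed

lemma poly_root: assumes "z \<in> polygon v n" shows "sarea (v (n - 1)) (v 0) z \<ge> 0"
proof -
  have "\<forall>j<n. sarea (v (n - 1)) (v 0) (v j) \<ge> 0"
  proof (intro allI impI)
    fix j assume "j < n"
    then have "sarea (v 0) (v (n - 1)) (v j) \<le> 0" using sign_in'[of 0 j "n - 1"] n3 by linarith
    then show "sarea (v (n - 1)) (v 0) (v j) \<ge> 0" using sarea_anti[of "v (n - 1)" "v 0" "v j"] by linarith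
  qed
  then show ?thesis using half_poly assms by blast
qed

lemma bary_nonneg: assumes "p < k" "k < q" "q < n" "z \<in> tri v (p,k,q)" shows "bary v (p,k,q) z j \<ge> 0"
  using assms tri_iff[OF assms(1-3)] unfolding bary_def tri_vertex_def by auto

lemma vert_in_tri: assumes pkq: "p < k" "k < q" "q < n" and j: "j < n" and vj: "v j \<in> tri v (p,k,q)"
  shows "j = p \<or> j = k \<or> j = q"
proof (rule ccontr)
  assume nj: "\<not> (j = p \<or> j = k \<or> j = q)"
  have A: "sarea (v p) (v k) (v q) > 0" using pos[OF pkq] .
  have ar: "areal v (p,k,q) p (v j) \<ge> 0" "areal v (p,k,q) k (v j) \<ge> 0" "areal v (p,k,q) q (v j) \<ge> 0"
    using vj tri_iff[OF pkq] by auto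
  have c: "sarea (v q) (v j) (v k) = sarea (v k) (v q) (v j)"
          "sarea (v p) (v j) (v q) = - sarea (v p) (v q) (v j)"
          "sarea (v k) (v j) (v p) = sarea (v p) (v k) (v j)"
    by (metis sarea_cyc, metis sarea_cyc sarea_swap, metis sarea_cyc)
  have ar': "sarea (v k) (v q) (v j) \<ge> 0" "sarea (v p) (v q) (v j) \<le> 0" "sarea (v p) (v k) (v j) \<ge> 0"
    using ar A unfolding areal_abc[OF pkq(1,2)] c by (auto simp: zero_le_divide_iff divide_le_0_iff)
  consider "j < p" | "q < j" | "p < j \<and> j < k" | "k < j \<and> j < q" using nj by linarith
  then show False
  proof cases
    case 1 then show False using sign_out[of p q j] pkq ar' by auto
  next
    case 2 then show False using sign_out[of p q j] pkq ar' j by auto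
  next
    case 3 then show False using sign_in[of p j k] pkq ar' by auto
  next
    case 4 then show False using sign_in[of k j q] pkq ar' by auto
  qed
qed

end

context cdec begin

definition full :: "nat \<Rightarrow> nat \<Rightarrow> nat \<Rightarrow> bool" where
  "full p k q \<longleftrightarrow> p < k \<and> k < q \<and> (p, q) \<in> R \<and> ((p, k) \<in> \<delta> \<or> k = Suc p) \<and> ((k, q) \<in> \<delta> \<or> q = Suc k)"

lemma full_props: "full p k q \<Longrightarrow> p < k \<and> k < q \<and> q < n"
  unfolding full_def using R_props by fastforce

lemma full_tri: assumes "full p k q" shows "(p, k, q) \<in> triangles v n \<delta>"
proof -
  have pkq: "p < k" "k < q" "q < n" using full_props[OF assms] by auto
  have "\<forall>d\<in>\<delta>. interior (tri v (p, k, q)) \<inter> chord_seg v d = {}"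
  proof
    fix d assume d: "d \<in> \<delta>"
    have "inarc p k q d" using apex_inarc assms d unfolding full_def by blast
    moreover have "fst d < n" "snd d < n" "fst d \<le> snd d" using chordD[OF d] by auto
    ultimately show "interior (tri v (p, k, q)) \<inter> chord_seg v d = {}"
      unfolding chord_seg_def using inarc_avoid[OF pkq] by blast
  qed
  then show ?thesis unfolding triangles_def using pkq by simp
qed

lemma cover_aux:
  assumes a: "a \<in> polygon v n"
  shows "(p, q) \<in> R \<Longrightarrow> sarea (v q) (v p) a \<ge> 0 \<Longrightarrow> \<exists>p' k' q'. full p' k' q' \<and> a \<in> tri v (p', k', q')"
proof (induction "q - p" arbitrary: p q rule: less_induct)
  case less
  obtain k where k: "p < k" "k < q" and pk: "(p, k) \<in> \<delta> \<or> k = Suc p" and kq: "(k, q) \<in> \<delta> \<or> q = Suc k"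
    using apex[OF less.prems(1)] by blast
  have fl: "full p k q" unfolding full_def using k pk kq less.prems(1) by simp
  have pkq: "p < k" "k < q" "q < n" using full_props[OF fl] by auto
  have A: "sarea (v p) (v k) (v q) > 0" using pos[OF pkq] .
  have c: "sarea (v q) a (v k) = sarea (v k) (v q) a"
          "sarea (v p) a (v q) = sarea (v q) (v p) a"
          "sarea (v k) a (v p) = sarea (v p) (v k) a"
    by (metis sarea_cyc)+
  show ?case
  proof (cases "sarea (v p) (v k) a \<ge> 0 \<and> sarea (v k) (v q) a \<ge> 0")
    case True
    then have "a \<in> tri v (p, k, q)" unfolding tri_iff[OF pkq] areal_abc[OF pkq(1,2)] c
      using less.prems(2) A by simp
    then show ?thesis using fl by blast
  next
    case False
    then consider "sarea (v p) (v k) a < 0" | "sarea (v k) (v q) a < 0" by linarith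
    then show ?thesis
    proof cases
      case 1
      have "k \<noteq> Suc p" using poly_edge[OF _ a, of p] pkq 1 by auto
      then have "(p, k) \<in> R" using pk unfolding R_def by simp
      moreover have "sarea (v k) (v p) a \<ge> 0" using 1 sarea_anti[of "v k" "v p" a] by simp
      ultimately show ?thesis using less.hyps[of k p] k by simp
    next
      case 2
      have "q \<noteq> Suc k" using poly_edge[OF _ a, of k] pkq 2 by auto
      then have "(k, q) \<in> R" using kq unfolding R_def by simp
      moreover have "sarea (v q) (v k) a \<ge> 0" using 2 sarea_anti[of "v q" "v k" a] by simp
      ultimately show ?thesis using less.hyps[of q k] k by simp
    qed
  qed
qed

lemma cover: assumes a: "a \<in> polygon v n" shows "\<exists>p k q. full p k q \<and> a \<in> tri v (p, k, q)"
  using cover_aux[OF a, of 0 "n - 1"] poly_root[OF a] unfolding R_def by simp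

end


lemma tri_eq: "tri v (a, b, c) = convex hull {v a, v b, v c}" by (simp add: tri_def)

context cpoly begin

lemma interior_ne: assumes "a < b" "b < c" "c < n" shows "interior (tri v (a,b,c)) \<noteq> {}"
proof -
  let ?z = "(1/3) *\<^sub>R v a + (1/3) *\<^sub>R v b + (1/3) *\<^sub>R v c"
  have "?z \<in> interior (tri v (a,b,c))" unfolding interior_tri[OF assms]
    using areal_tri_comb[OF assms, of "1/3" "1/3" "1/3"] by simp
  then show ?thesis by blast
qed

lemma uniq:
  assumes L: "L \<subseteq> {..<n}" and three: "\<And>i j l. i \<in> L \<Longrightarrow> j \<in> L \<Longrightarrow> l \<in> L \<Longrightarrow> i \<noteq> j \<Longrightarrow> i \<noteq> l \<Longrightarrow> j \<noteq> l \<Longrightarrow> False"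
    and out: "\<And>j. j < n \<Longrightarrow> j \<notin> L \<Longrightarrow> D j = 0"
    and s1: "(\<Sum>j<n. D j) = 0" and s2: "(\<Sum>j<n. D j *\<^sub>R v j) = 0"
  shows "\<forall>j<n. D j = 0"
proof (rule ccontr)
  assume "\<not> (\<forall>j<n. D j = 0)"
  then obtain i where i: "i < n" "D i \<noteq> 0" by blast
  have iL: "i \<in> L" using out i by blast
  have "\<exists>i'<n. i' \<noteq> i \<and> D i' \<noteq> 0"
  proof (rule ccontr)
    assume "\<not> (\<exists>i'<n. i' \<noteq> i \<and> D i' \<noteq> 0)"
    then have "\<forall>j\<in>{..<n} - {i}. D j = 0" by auto
    then have "(\<Sum>j<n. D j) = (\<Sum>j\<in>{i}. D j)" by (intro sum.mono_neutral_right) (use i in auto)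
    then show False using s1 i by simp
  qed
  then obtain i' where i': "i' < n" "i' \<noteq> i" "D i' \<noteq> 0" by blast
  have i'L: "i' \<in> L" using out i' by blast
  have rest: "\<forall>j\<in>{..<n} - {i, i'}. D j = 0"
  proof
    fix j assume j: "j \<in> {..<n} - {i, i'}"
    show "D j = 0"
    proof (rule ccontr)
      assume "D j \<noteq> 0" then have "j \<in> L" using out j by blast
      then show False using three[OF iL i'L] j i' by blast
    qed
  qed
  have rest2: "\<forall>j\<in>{..<n} - {i, i'}. D j *\<^sub>R v j = 0" using rest by simp
  have sub: "{i, i'} \<subseteq> {..<n}" using i i' by auto
  have "(\<Sum>j<n. D j) = (\<Sum>j\<in>{i,i'}. D j)" by (rule sum.mono_neutral_right[OF _ sub rest]) simp
  then have e1: "D i + D i' = 0" using s1 i' by simp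
  have "(\<Sum>j<n. D j *\<^sub>R v j) = (\<Sum>j\<in>{i,i'}. D j *\<^sub>R v j)" by (rule sum.mono_neutral_right[OF _ sub rest2]) simp
  then have e2: "D i *\<^sub>R v i + D i' *\<^sub>R v i' = 0" using s2 i' by simp
  have "D i' = - D i" using e1 by simp
  then have "D i *\<^sub>R (v i - v i') = 0" using e2 by (simp add: scaleR_diff_right)
  then have "v i = v i'" using i by simp
  then show False using vinj i i' by metis
qed

end

context cdec begin

lemma consistent:
  assumes tau: "(x, y, z) \<in> triangles v n \<delta>" and fl: "full p k q"
    and a: "a \<in> tri v (x, y, z)" "a \<in> tri v (p, k, q)"
  shows "bary v (x, y, z) a = bary v (p, k, q) a"
proof -
  have xyz: "x < y" "y < z" "z < n" using tau unfolding triangles_def by auto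
  have avoid: "\<forall>d\<in>\<delta>. interior (tri v (x, y, z)) \<inter> chord_seg v d = {}"
    using tau unfolding triangles_def by auto
  have pkq: "p < k" "k < q" "q < n" using full_props[OF fl] by auto
  define U where "U = interior (tri v (x, y, z))"
  define U0 where "U0 = interior (tri v (p, k, q))"
  define T where "T = tri v (x, y, z)"
  define T0 where "T0 = tri v (p, k, q)"
  have A: "sarea (v p) (v k) (v q) > 0" using pos[OF pkq] .
  have E1: "U \<inter> closed_segment (v p) (v k) = {}"
  proof (cases "(p, k) \<in> \<delta>")
    case True then show ?thesis using avoid unfolding U_def chord_seg_def by fastforce
  next
    case False then have "k = Suc p" using fl unfolding full_def by auto
    then show ?thesis unfolding U_def using edge_avoid[OF xyz, of p] pkq by simp
  qed
  have E2: "U \<inter> closed_segment (v k) (v q) = {}"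
  proof (cases "(k, q) \<in> \<delta>")
    case True then show ?thesis using avoid unfolding U_def chord_seg_def by fastforce
  next
    case False then have "q = Suc k" using fl unfolding full_def by auto
    then show ?thesis unfolding U_def using edge_avoid[OF xyz, of k] pkq by simp
  qed
  have E3: "U \<inter> closed_segment (v p) (v q) = {}"
  proof (cases "(p, q) \<in> \<delta>")
    case True then show ?thesis using avoid unfolding U_def chord_seg_def by fastforce
  next
    case False then have "(p, q) = (0, n - 1)" using fl unfolding full_def R_def by auto
    then show ?thesis unfolding U_def using root_avoid[OF xyz] by simp
  qed
  have Sub: "U \<inter> T0 \<subseteq> U0"
  proof
    fix w assume w: "w \<in> U \<inter> T0"
    have wT: "w \<in> convex hull {v p, v k, v q}" using w unfolding T0_def tri_eq by blast
    have ar: "areal v (p,k,q) p w \<ge> 0" "areal v (p,k,q) k w \<ge> 0" "areal v (p,k,q) q w \<ge> 0"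
      using w tri_iff[OF pkq] unfolding T0_def by auto
    have nz: "areal v (p,k,q) p w \<noteq> 0 \<and> areal v (p,k,q) k w \<noteq> 0 \<and> areal v (p,k,q) q w \<noteq> 0"
    proof (intro conjI notI)
      assume h: "areal v (p,k,q) q w = 0"
      have "w \<in> closed_segment (v p) (v k)"
        by (rule hull3_seg) (use A wT h areal_abc[OF pkq(1,2)] in auto)
      then show False using E1 w by blast
    next
      assume h: "areal v (p,k,q) p w = 0"
      have "w \<in> closed_segment (v k) (v q)"
      proof (rule hull3_seg)
        show "sarea (v k) (v q) (v p) \<noteq> 0" using A sarea_cyc by (metis less_irrefl)
        show "w \<in> convex hull {v k, v q, v p}" using wT by (simp add: insert_commute)
        show "sarea (v q) w (v k) / sarea (v k) (v q) (v p) = 0" using h areal_abc[OF pkq(1,2)] sarea_cyc[of "v k" "v q" "v p"] sarea_cyc[of "v p" "v k" "v q"] by simp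
      qed
      then show False using E2 w by blast
    next
      assume h: "areal v (p,k,q) k w = 0"
      have "w \<in> closed_segment (v q) (v p)"
      proof (rule hull3_seg)
        show "sarea (v q) (v p) (v k) \<noteq> 0" using A sarea_cyc by (metis less_irrefl)
        show "w \<in> convex hull {v q, v p, v k}" using wT by (simp add: insert_commute)
        show "sarea (v p) w (v q) / sarea (v q) (v p) (v k) = 0" using h areal_abc[OF pkq(1,2)] sarea_cyc[of "v q" "v p" "v k"] sarea_cyc[of "v p" "v k" "v q"] by simp
      qed
      then show False using E3 w by (simp add: closed_segment_commute) blast
    qed
    then show "w \<in> U0" unfolding U0_def interior_tri[OF pkq] using ar by auto
  qed
  have convT: "convex T" "convex T0" unfolding T_def T0_def tri_eq by simp_all
  have clT: "closed T" "closed T0" unfolding T_def T0_def tri_eq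
    by (simp_all add: compact_imp_closed finite_imp_compact_convex_hull)
  have neU: "U \<noteq> {}" "U0 \<noteq> {}" unfolding U_def U0_def using interior_ne xyz pkq by auto
  have clU: "closure U = T" "closure U0 = T0" unfolding U_def U0_def
    using convex_closure_interior[OF convT(1)] convex_closure_interior[OF convT(2)] neU clT
    unfolding U_def U0_def T_def T0_def by auto
  have conU: "connected U" unfolding U_def using convT(1) unfolding T_def
    by (intro convex_connected convex_interior)
  have "U0 \<inter> U = {} \<or> (- T0) \<inter> U = {}"
  proof (rule connectedD[OF conU])
    show "open U0" unfolding U0_def by simp
    show "open (- T0)" using clT by auto
    show "U0 \<inter> - T0 \<inter> U = {}" unfolding U0_def T0_def using interior_subset by blast
    show "U \<subseteq> U0 \<union> - T0" using Sub by blast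
  qed
  then show ?thesis
  proof
    assume "(- T0) \<inter> U = {}"
    then have "U \<subseteq> T0" by blast
    then have "T \<subseteq> T0" using closure_minimal clU clT by metis
    then have vin: "v x \<in> T0" "v y \<in> T0" "v z \<in> T0" unfolding T_def tri_eq by (auto intro: hull_inc)
    have "x = p \<or> x = k \<or> x = q" "y = p \<or> y = k \<or> y = q" "z = p \<or> z = k \<or> z = q"
      using vert_in_tri[OF pkq] vin xyz unfolding T0_def by auto
    then have "x = p" "y = k" "z = q" using xyz pkq by linarith+
    then show ?thesis by simp
  next
    assume disj: "U0 \<inter> U = {}"
    have cU0: "convex U0" and cU: "convex U" using convT unfolding U_def U0_def T_def T0_def by simp_all
    obtain c b where c: "c \<noteq> 0" and h0: "\<forall>w\<in>U0. inner c w \<le> b" and h1: "\<forall>w\<in>U. inner c w \<ge> b"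
      using separating_hyperplane_sets[OF cU0 cU neU(2) neU(1) disj] by blast
    have T0h: "T0 \<subseteq> {w. inner c w \<le> b}" using closure_minimal[of U0 "{w. inner c w \<le> b}"] h0 clU closed_halfspace_le by auto
    have Th: "T \<subseteq> {w. inner c w \<ge> b}" using closure_minimal[of U "{w. inner c w \<ge> b}"] h1 clU closed_halfspace_ge by auto
    have ab: "inner c a = b" using a T0h Th unfolding T_def T0_def by fastforce
    define lam where "lam = bary v (p, k, q) a"
    define mu where "mu = bary v (x, y, z) a"
    have lam_nn: "\<And>j. lam j \<ge> 0" unfolding lam_def using bary_nonneg[OF pkq a(2)] .
    have mu_nn: "\<And>j. mu j \<ge> 0" unfolding mu_def using bary_nonneg[OF xyz a(1)] .
    have lam_v: "\<And>j. lam j \<noteq> 0 \<Longrightarrow> v j \<in> T0 \<and> j < n"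
      unfolding lam_def bary_def tri_vertex_def T0_def tri_eq using pkq by (auto intro: hull_inc split: if_splits)
    have mu_v: "\<And>j. mu j \<noteq> 0 \<Longrightarrow> v j \<in> T \<and> j < n"
      unfolding mu_def bary_def tri_vertex_def T_def tri_eq using xyz by (auto intro: hull_inc split: if_splits)
    have sl: "(\<Sum>j<n. lam j) = 1" "(\<Sum>j<n. lam j *\<^sub>R v j) = a" unfolding lam_def using bary_sums[OF pkq] by auto
    have sm: "(\<Sum>j<n. mu j) = 1" "(\<Sum>j<n. mu j *\<^sub>R v j) = a" unfolding mu_def using bary_sums[OF xyz] by auto
    define L where "L = {j. j < n \<and> inner c (v j) = b}"
    have lamL: "lam j = 0" if j: "j < n" "j \<notin> L" for j
    proof -
      have "(\<Sum>j<n. lam j * (b - inner c (v j))) = b * (\<Sum>j<n. lam j) - inner c (\<Sum>j<n. lam j *\<^sub>R v j)"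
        by (simp add: sum_distrib_left inner_sum_right sum_subtractf algebra_simps)
      also have "\<dots> = 0" using sl ab by simp
      finally have s0: "(\<Sum>j<n. lam j * (b - inner c (v j))) = 0" .
      have nn: "\<And>j. j \<in> {..<n} \<Longrightarrow> 0 \<le> lam j * (b - inner c (v j))"
      proof -
        fix j show "0 \<le> lam j * (b - inner c (v j))"
        proof (cases "lam j = 0")
          case False then have "v j \<in> T0" using lam_v by blast
          then show ?thesis using T0h lam_nn[of j] by auto
        qed simp
      qed
      have "lam j * (b - inner c (v j)) = 0" using sum_nonneg_eq_0_iff[of "{..<n}", OF _ nn] s0 j by simp
      moreover have "lam j \<noteq> 0 \<Longrightarrow> inner c (v j) < b" using lam_v T0h j unfolding L_def by fastforce
      ultimately show ?thesis by auto
    qed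
    have muL: "mu j = 0" if j: "j < n" "j \<notin> L" for j
    proof -
      have "(\<Sum>j<n. mu j * (inner c (v j) - b)) = inner c (\<Sum>j<n. mu j *\<^sub>R v j) - b * (\<Sum>j<n. mu j)"
        by (simp add: sum_distrib_left inner_sum_right sum_subtractf algebra_simps)
      also have "\<dots> = 0" using sm ab by simp
      finally have s0: "(\<Sum>j<n. mu j * (inner c (v j) - b)) = 0" .
      have nn: "\<And>j. j \<in> {..<n} \<Longrightarrow> 0 \<le> mu j * (inner c (v j) - b)"
      proof -
        fix j show "0 \<le> mu j * (inner c (v j) - b)"
        proof (cases "mu j = 0")
          case False then have "v j \<in> T" using mu_v by blast
          then show ?thesis using Th mu_nn[of j] by auto
        qed simp
      qed
      have "mu j * (inner c (v j) - b) = 0" using sum_nonneg_eq_0_iff[of "{..<n}", OF _ nn] s0 j by simp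
      moreover have "mu j \<noteq> 0 \<Longrightarrow> inner c (v j) > b" using mu_v Th j unfolding L_def by fastforce
      ultimately show ?thesis by auto
    qed
    have three: "False" if "i \<in> L" "j \<in> L" "l \<in> L" "i \<noteq> j" "i \<noteq> l" "j \<noteq> l" for i j l
    proof -
      have "sarea (v i) (v j) (v l) = 0" using line3[OF c] that unfolding L_def by blast
      moreover have "sarea (v i) (v j) (v l) \<noteq> 0" using sarea_ne0 that unfolding L_def by blast
      ultimately show False by simp
    qed
    have "\<forall>j<n. lam j - mu j = 0"
    proof (rule uniq[of L])
      show "L \<subseteq> {..<n}" unfolding L_def by auto
      show "\<And>i j l. i \<in> L \<Longrightarrow> j \<in> L \<Longrightarrow> l \<in> L \<Longrightarrow> i \<noteq> j \<Longrightarrow> i \<noteq> l \<Longrightarrow> j \<noteq> l \<Longrightarrow> False" using three by blast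
      show "\<And>j. j < n \<Longrightarrow> j \<notin> L \<Longrightarrow> lam j - mu j = 0" using lamL muL by simp
      show "(\<Sum>j<n. lam j - mu j) = 0" using sl sm by (simp add: sum_subtractf)
      show "(\<Sum>j<n. (lam j - mu j) *\<^sub>R v j) = 0" using sl sm by (simp add: scaleR_diff_left sum_subtractf)
    qed
    then have "lam j = mu j" for j
    proof (cases "j < n")
      case False
      then have "lam j = 0" "mu j = 0" using lam_v[of j] mu_v[of j] by auto
      then show ?thesis by simp
    qed (use \<open>\<forall>j<n. lam j - mu j = 0\<close> in auto)
    then show ?thesis unfolding lam_def mu_def by (intro ext) simp
  qed
qed

end


lemma first_sum:
  fixes S :: "nat \<Rightarrow> pt set" and f :: "nat \<Rightarrow> real"
  assumes "\<And>k. k < m \<Longrightarrow> a \<in> S k \<Longrightarrow> f k = \<beta>"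
  shows "(\<Sum>k<m. indicator (S k) a * f k - indicator (S k \<inter> (\<Union>l<k. S l)) a * f k)
       = (if \<exists>k<m. a \<in> S k then \<beta> else 0)"
  using assms
proof (induction m)
  case 0 then show ?case by simp
next
  case (Suc m)
  have IH: "(\<Sum>k<m. indicator (S k) a * f k - indicator (S k \<inter> (\<Union>l<k. S l)) a * f k)
       = (if \<exists>k<m. a \<in> S k then \<beta> else 0)" using Suc by simp
  show ?case
  proof (cases "a \<in> S m")
    case True
    then have fm: "f m = \<beta>" using Suc.prems by simp
    show ?thesis
    proof (cases "\<exists>k<m. a \<in> S k")
      case True
      then have "a \<in> S m \<inter> (\<Union>l<m. S l)" using \<open>a \<in> S m\<close> by blast
      then show ?thesis using IH True \<open>a \<in> S m\<close> by (auto simp: indicator_def)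
    next
      case False
      then have "a \<notin> S m \<inter> (\<Union>l<m. S l)" by blast
      then show ?thesis using IH False \<open>a \<in> S m\<close> fm by (auto simp: indicator_def)
    qed
  next
    case False
    have e: "(\<exists>k<Suc m. a \<in> S k) = (\<exists>k<m. a \<in> S k)" using False less_Suc_eq by auto
    show ?thesis using IH False unfolding e by (simp add: indicator_def)
  qed
qed

context cdec begin

lemma coord_eq:
  assumes fl: "full p k q" and a: "a \<in> tri v (p, k, q)"
    and en: "distinct ts \<and> set ts = {t \<in> triangles v n \<delta>. tri_vertex i t}"
  shows "chordal_coord v ts i a = bary v (p, k, q) a i"
proof -
  have h: "areal v (ts ! j) i a = bary v (p, k, q) a i" if j: "j < length ts" "a \<in> tri v (ts ! j)" for j
  proof -
    have mem: "ts ! j \<in> triangles v n \<delta>" "tri_vertex i (ts ! j)" using en j nth_mem by blast+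
    obtain x y z where xyz: "ts ! j = (x, y, z)" by (cases "ts ! j") auto
    have "bary v (x, y, z) a = bary v (p, k, q) a" using consistent[of x y z p k q a] mem j fl a xyz by simp
    then have "bary v (x, y, z) a i = bary v (p, k, q) a i" by simp
    then show ?thesis using mem(2) xyz unfolding bary_def by simp
  qed
  have cc: "chordal_coord v ts i a = (if \<exists>j<length ts. a \<in> tri v (ts ! j) then bary v (p, k, q) a i else 0)"
    unfolding chordal_coord_def by (rule first_sum) (use h in blast)
  show ?thesis
  proof (cases "\<exists>j<length ts. a \<in> tri v (ts ! j)")
    case True then show ?thesis using cc by simp
  next
    case False
    have "\<not> tri_vertex i (p, k, q)"
    proof
      assume "tri_vertex i (p, k, q)"
      then have "(p, k, q) \<in> set ts" using en full_tri[OF fl] by simp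
      then obtain j where "j < length ts" "ts ! j = (p, k, q)" by (meson in_set_conv_nth)
      then show False using False a by metis
    qed
    then show ?thesis using cc False unfolding bary_def by simp
  qed
qed

end

theorem theorem7p14:
  fixes v :: "nat \<Rightarrow> real \<times> real" and n :: nat
    and \<delta> :: "(nat \<times> nat) set"
    and enum :: "nat \<Rightarrow> (nat \<times> nat \<times> nat) list"
    and a :: "real \<times> real"
  assumes "convex_polygon_ccw v n"
    and "chordal_decomposition v n \<delta>"
    and "\<forall>i<n. distinct (enum i) \<and>
           set (enum i) = {t \<in> triangles v n \<delta>. tri_vertex i t}"
    and "a \<in> polygon v n"
  shows "(\<Sum>i<n. chordal_coord v (enum i) i a) = 1
       \<and> a = (\<Sum>i<n. chordal_coord v (enum i) i a *\<^sub>R v i)"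
proof -
  interpret cdec v n \<delta>
    using assms(1,2) by (simp add: cdec_def cdec_axioms_def cpoly_def)
  obtain p k q where fl: "full p k q" and ain: "a \<in> tri v (p, k, q)" using cover[OF assms(4)] by blast
  have pkq: "p < k" "k < q" "q < n" using full_props[OF fl] by auto
  have ce: "\<And>i. i < n \<Longrightarrow> chordal_coord v (enum i) i a = bary v (p, k, q) a i"
    using coord_eq[OF fl ain] assms(3) by blast
  have "(\<Sum>i<n. chordal_coord v (enum i) i a) = (\<Sum>i<n. bary v (p, k, q) a i)"
    using ce by (intro sum.cong) auto
  also have "\<dots> = 1" using bary_sums[OF pkq] by simp
  finally have s1: "(\<Sum>i<n. chordal_coord v (enum i) i a) = 1" .
  have "(\<Sum>i<n. chordal_coord v (enum i) i a *\<^sub>R v i) = (\<Sum>i<n. bary v (p, k, q) a i *\<^sub>R v i)"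
    using ce by (intro sum.cong) auto
  also have "\<dots> = a" using bary_sums[OF pkq] by simp
  finally show ?thesis using s1 by simp
qed


end
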